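(* Let $C=(c_{ij})_{1\le i,j\le 6}$ be the Cartan matrix of type $E_6$: $c_{ii}=2$, $c_{ij}=c_{ji}=-1$ for $\{i,j\} \in \{\{1,3\},\{3,4\},\{4,5\},\{5,6\},\{2,4\}\}$, and $c_{ij}=0$ otherwise. Let $e_1,\dots,e_6$ be the standard basis of $\mathbb{Z}^6$, define $s_i \in \mathrm{GL}_6(\mathbb{Z})$ by $s_i(e_j) = e_j - c_{ji} e_i$, let $w = s_1 s_3 s_5 s_6$ and for a prime power $q$ let $T(q) = \mathbb{Z}^6/(q w - \mathrm{id})\mathbb{Z}^6$. Put $N = (q-1)(q^2+q+1) = q^3-1$. Then: if $q \equiv 0$ or $2 \pmod 3$, $T(q) \cong \mathbb{Z}/N \times \mathbb{Z}/N$; if $q \equiv 1 \pmod 3$, $T(q) \cong \mathbb{Z}/3 \times \mathbb{Z}/(N/3) \times \mathbb{Z}/N$ (these being the elementary divisors). In all cases $T(q) \cong \mathbb{Z}/(q-1) \times \mathbb{Z}/(q^2+q+1) \times \mathbb{Z}/N$. *)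

theory Defs
  imports "HOL-Algebra.Algebra"
begin

definition cartanE6 :: "nat \<Rightarrow> nat \<Rightarrow> int" where
  "cartanE6 i j =
     (if i = j then 2
      else if {i, j} \<in> {{1,3},{3,4},{4,5},{5,6},{2,4}} then -1 else 0)"

text \<open>Z^6 as integer vectors indexed by 1..6 (zero outside).\<close>
definition Z6 :: "(nat \<Rightarrow> int) set" where
  "Z6 = {v. \<forall>k. k \<notin> {1..6} \<longrightarrow> v k = 0}"

definition stdbasis :: "nat \<Rightarrow> nat \<Rightarrow> int" where
  "stdbasis i = (\<lambda>k. if k = i then 1 else 0)"

text \<open>The simple reflection s_i, the Z-linear map with s_i(e_j) = e_j - c_{ji} e_i.\<close>
definition sref :: "nat \<Rightarrow> (nat \<Rightarrow> int) \<Rightarrow> (nat \<Rightarrow> int)" where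
  "sref i v = (\<lambda>k. v k - (\<Sum>j\<in>{1..6}. v j * cartanE6 j i) * stdbasis i k)"

definition wE6 :: "(nat \<Rightarrow> int) \<Rightarrow> (nat \<Rightarrow> int)" where
  "wE6 = sref 1 \<circ> sref 3 \<circ> sref 5 \<circ> sref 6"

definition Z6_group :: "(nat \<Rightarrow> int) monoid" where
  "Z6_group = \<lparr>carrier = Z6, monoid.mult = (\<lambda>u v k. u k + v k), one = (\<lambda>k. 0)\<rparr>"

definition Tsub :: "nat \<Rightarrow> (nat \<Rightarrow> int) set" where
  "Tsub q = (\<lambda>v. (\<lambda>k. int q * wE6 v k - v k)) ` Z6"

definition Tgroup :: "nat \<Rightarrow> (nat \<Rightarrow> int) set monoid" where
  "Tgroup q = Z6_group Mod Tsub q"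

end

theory Submission
  imports Defs
begin

lemma sum6: "(\<Sum>j\<in>{1..6::nat}. f j) = f 1 + f 2 + f 3 + f 4 + f 5 + f 6"
proof -
  have s: "{1..6::nat} = {1,2,3,4,5,6}" by auto
  show ?thesis unfolding s by (simp add: algebra_simps)
qed

lemma cart: "cartanE6 1 1 = 2" "cartanE6 2 1 = 0" "cartanE6 3 1 = -1" "cartanE6 4 1 = 0" "cartanE6 5 1 = 0" "cartanE6 6 1 = 0"
  "cartanE6 1 3 = -1" "cartanE6 2 3 = 0" "cartanE6 3 3 = 2" "cartanE6 4 3 = -1" "cartanE6 5 3 = 0" "cartanE6 6 3 = 0"
  "cartanE6 1 5 = 0" "cartanE6 2 5 = 0" "cartanE6 3 5 = 0" "cartanE6 4 5 = -1" "cartanE6 5 5 = 2" "cartanE6 6 5 = -1"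
  "cartanE6 1 6 = 0" "cartanE6 2 6 = 0" "cartanE6 3 6 = 0" "cartanE6 4 6 = 0" "cartanE6 5 6 = -1" "cartanE6 6 6 = 2"
  by (simp_all add: cartanE6_def doubleton_eq_iff)

lemma sref_e: "sref i v = (\<lambda>k. if k = i then v k - (\<Sum>j\<in>{1..6}. v j * cartanE6 j i) else v k)"
  by (auto simp: sref_def stdbasis_def)

lemma sref1: "sref 1 v = (\<lambda>k. if k = 1 then - v 1 + v 3 else v k)"
  unfolding sref_e sum6 cart by (rule ext) simp
lemma sref3: "sref 3 v = (\<lambda>k. if k = 3 then v 1 - v 3 + v 4 else v k)"
  unfolding sref_e sum6 cart by (rule ext) simp
lemma sref5: "sref 5 v = (\<lambda>k. if k = 5 then v 4 - v 5 + v 6 else v k)"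
  unfolding sref_e sum6 cart by (rule ext) simp
lemma sref6: "sref 6 v = (\<lambda>k. if k = 6 then v 5 - v 6 else v k)"
  unfolding sref_e sum6 cart by (rule ext) simp

lemma wE6_explicit:
  "wE6 v = (\<lambda>k. if k=1 then - v 3 + v 4 else if k=3 then v 1 - v 3 + v 4
     else if k=5 then v 4 - v 6 else if k=6 then v 5 - v 6 else v k)"
  unfolding wE6_def comp_def sref1 sref3 sref5 sref6 by (rule ext) simp

lemma group_Z6: "group Z6_group"
proof (rule groupI)
  show "\<And>x y. x \<in> carrier Z6_group \<Longrightarrow> y \<in> carrier Z6_group \<Longrightarrow> x \<otimes>\<^bsub>Z6_group\<^esub> y \<in> carrier Z6_group"
    by (auto simp: Z6_group_def Z6_def)
  show "\<one>\<^bsub>Z6_group\<^esub> \<in> carrier Z6_group" by (auto simp: Z6_group_def Z6_def)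
  show "\<And>x y z. x \<in> carrier Z6_group \<Longrightarrow> y \<in> carrier Z6_group \<Longrightarrow> z \<in> carrier Z6_group \<Longrightarrow>
     x \<otimes>\<^bsub>Z6_group\<^esub> y \<otimes>\<^bsub>Z6_group\<^esub> z = x \<otimes>\<^bsub>Z6_group\<^esub> (y \<otimes>\<^bsub>Z6_group\<^esub> z)"
    by (auto simp: Z6_group_def)
  show "\<And>x. x \<in> carrier Z6_group \<Longrightarrow> \<one>\<^bsub>Z6_group\<^esub> \<otimes>\<^bsub>Z6_group\<^esub> x = x"
    by (auto simp: Z6_group_def)
  show "\<And>x. x \<in> carrier Z6_group \<Longrightarrow> \<exists>y\<in>carrier Z6_group. y \<otimes>\<^bsub>Z6_group\<^esub> x = \<one>\<^bsub>Z6_group\<^esub>"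
  proof -
    fix x assume "x \<in> carrier Z6_group"
    then show "\<exists>y\<in>carrier Z6_group. y \<otimes>\<^bsub>Z6_group\<^esub> x = \<one>\<^bsub>Z6_group\<^esub>"
      by (intro bexI[of _ "\<lambda>k. - x k"]) (auto simp: Z6_group_def Z6_def)
  qed
qed

definition phi :: "nat \<Rightarrow> (nat \<Rightarrow> int) \<Rightarrow> int \<times> int \<times> int" where
  "phi q x = (x 2 mod int (q-1),
     (int q * x 5 + x 6 - (int q + 1) * (int q * x 1 + x 3)) mod int (q^2+q+1),
     (x 4 + (int q - 1) * (int q * x 1 + x 3)) mod int (q^3-1))"

definition HH :: "nat \<Rightarrow> (int \<times> int \<times> int) monoid" where
  "HH q = integer_mod_group (q - 1) \<times>\<times> integer_mod_group (q\<^sup>2 + q + 1) \<times>\<times> integer_mod_group (q^3-1)"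

lemma group_HH: "group (HH q)"
  unfolding HH_def by (intro DirProd_group group_integer_mod_group)

lemma q3pos: fixes q :: nat assumes q2: "q \<ge> 2" shows "q - 1 > 0" "q^2+q+1 > 0" "q^3 - 1 > 0" "q^3 \<ge> 8"
proof -
  have "q^3 \<ge> 2^3" using q2 by (rule power_mono) simp
  then show "q - 1 > 0" "q^2+q+1 > 0" "q^3 - 1 > 0" "q^3 \<ge> 8" using q2 by auto
qed

lemma phi_hom:
  assumes q2: "q \<ge> 2"
  shows "phi q \<in> hom Z6_group (HH q)"
proof -
  have p1: "int (q - 1) > 0" "int (q^2+q+1) > 0" "int (q^3-1) > 0" using q3pos[OF q2] by (simp_all only: of_nat_0_less_iff)
  show ?thesis
    unfolding hom_def
  proof (intro CollectI conjI ballI)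
    show "phi q \<in> carrier Z6_group \<rightarrow> carrier (HH q)"
      using p1 by (auto simp: HH_def phi_def carrier_integer_mod_group)
    fix x y assume "x \<in> carrier Z6_group" "y \<in> carrier Z6_group"
    show "phi q (x \<otimes>\<^bsub>Z6_group\<^esub> y) = phi q x \<otimes>\<^bsub>HH q\<^esub> phi q y"
      by (simp add: HH_def phi_def Z6_group_def mod_add_eq algebra_simps)
  qed
qed

lemma int_facts: fixes q :: nat assumes q2: "q \<ge> 2"
  shows "int (q-1) = int q - 1" "int (q^2+q+1) = (int q)^2 + int q + 1" "int (q^3-1) = (int q)^3 - 1"
  using q3pos[OF q2] by (auto simp: of_nat_diff)

lemma phi_surj:
  assumes q2: "q \<ge> 2"
  shows "phi q ` carrier Z6_group = carrier (HH q)"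
proof
  show "phi q ` carrier Z6_group \<subseteq> carrier (HH q)"
    using phi_hom[OF q2] by (auto simp: hom_def)
  have p1: "int (q - 1) > 0" "int (q^2+q+1) > 0" "int (q^3-1) > 0" using q3pos[OF q2] by (simp_all only: of_nat_0_less_iff)
  show "carrier (HH q) \<subseteq> phi q ` carrier Z6_group"
  proof
    fix y assume y: "y \<in> carrier (HH q)"
    obtain a b c where abc: "y = (a,b,c)" by (cases y) auto
    have r: "0 \<le> a" "a < int (q-1)" "0 \<le> b" "b < int (q^2+q+1)" "0 \<le> c" "c < int (q^3-1)"
      using y p1 q3pos[OF q2] by (auto simp: abc HH_def carrier_integer_mod_group)
    define x where "x = (\<lambda>k::nat. if k = 2 then a else if k = 6 then b else if k = 4 then c else 0)"
    have "x \<in> carrier Z6_group" by (auto simp: x_def Z6_group_def Z6_def)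
    moreover have "phi q x = y"
      using r by (simp add: phi_def x_def abc)
    ultimately show "y \<in> phi q ` carrier Z6_group" by blast
  qed
qed

lemma phi_kernel:
  assumes q2: "q \<ge> 2"
  shows "kernel Z6_group (HH q) (phi q) = Tsub q"
proof
  let ?Q = "int q"
  note IF = int_facts[OF q2]
  show "Tsub q \<subseteq> kernel Z6_group (HH q) (phi q)"
  proof
    fix x assume "x \<in> Tsub q"
    then obtain u where u: "u \<in> Z6" and x: "x = (\<lambda>k. ?Q * wE6 u k - u k)" by (auto simp: Tsub_def)
    have "x \<in> Z6" using u by (auto simp: Z6_def x wE6_explicit)
    moreover have "x 2 = (?Q - 1) * u 2" by (simp add: x wE6_explicit algebra_simps)
    moreover have "?Q * x 5 + x 6 - (?Q + 1) * (?Q * x 1 + x 3) = (?Q^2 + ?Q + 1) * (- u 6 + (?Q+1) * u 3 - ?Q * u 4)"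
      by (simp add: x wE6_explicit algebra_simps power2_eq_square)
    moreover have "x 4 + (?Q - 1) * (?Q * x 1 + x 3) = (?Q^3 - 1) * (u 4 - u 3)"
      by (simp add: x wE6_explicit algebra_simps power3_eq_cube)
    ultimately show "x \<in> kernel Z6_group (HH q) (phi q)"
      unfolding kernel_def phi_def IF by (simp add: Z6_group_def HH_def)
  qed
  show "kernel Z6_group (HH q) (phi q) \<subseteq> Tsub q"
  proof
    fix x assume "x \<in> kernel Z6_group (HH q) (phi q)"
    then have xZ: "x \<in> Z6" and h1: "x 2 mod (?Q - 1) = 0"
      and h2: "(?Q * x 5 + x 6 - (?Q + 1) * (?Q * x 1 + x 3)) mod (?Q^2 + ?Q + 1) = 0"
      and h3: "(x 4 + (?Q - 1) * (?Q * x 1 + x 3)) mod (?Q^3 - 1) = 0"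
      unfolding kernel_def phi_def IF by (auto simp: Z6_group_def HH_def)
    obtain k2 where k2: "x 2 = (?Q - 1) * k2" using h1 by (auto simp: mod_eq_0_iff_dvd dvd_def)
    obtain m where m: "?Q * x 5 + x 6 - (?Q + 1) * (?Q * x 1 + x 3) = (?Q^2 + ?Q + 1) * m"
      using h2 by (auto simp: mod_eq_0_iff_dvd dvd_def)
    obtain n where n: "x 4 + (?Q - 1) * (?Q * x 1 + x 3) = (?Q^3 - 1) * n"
      using h3 by (auto simp: mod_eq_0_iff_dvd dvd_def)
    define a where "a = ?Q * x 1 + x 3"
    define S where "S = ?Q^2 + ?Q + 1"
    define u4 where "u4 = S * n - a"
    define t where "t = a - (?Q^2 + ?Q) * n"
    define t' where "t' = a + m - ?Q^2 * n"
    define u where "u = (\<lambda>k::nat. if k = 1 then - (x 1 - ?Q * u4) + ?Q * t else if k = 2 then k2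
       else if k = 3 then - t else if k = 4 then u4 else if k = 5 then - (x 5 - ?Q * u4) + ?Q * t'
       else if k = 6 then - t' else 0)"
    have uZ: "u \<in> Z6" by (auto simp: u_def Z6_def)
    have x4: "x 4 = (?Q^3 - 1) * n - (?Q - 1) * a" using n a_def by simp
    have x6: "x 6 = S * m + (?Q + 1) * a - ?Q * x 5" using m a_def S_def by simp
    have x3: "x 3 = a - ?Q * x 1" using a_def by simp
    have "x = (\<lambda>k. ?Q * wE6 u k - u k)"
    proof
      fix k :: nat
      consider "k = 1" | "k = 2" | "k = 3" | "k = 4" | "k = 5" | "k = 6" | "k \<notin> {1..6}" by force
      then show "x k = ?Q * wE6 u k - u k"
      proof cases
        case 1 then show ?thesis by (simp add: wE6_explicit u_def algebra_simps)
      next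
        case 2 then show ?thesis by (simp add: wE6_explicit u_def algebra_simps k2)
      next
        case 3 then show ?thesis
          by (simp add: wE6_explicit u_def x3 u4_def t_def S_def) (simp add: algebra_simps power2_eq_square)
      next
        case 4 then show ?thesis
          by (simp add: wE6_explicit u_def x4 u4_def S_def) (simp add: algebra_simps power2_eq_square power3_eq_cube)
      next
        case 5 then show ?thesis by (simp add: wE6_explicit u_def algebra_simps)
      next
        case 6 then show ?thesis
          by (simp add: wE6_explicit u_def x6 u4_def t'_def S_def) (simp add: algebra_simps power2_eq_square)
      next
        case 7
        then have "k \<noteq> 1" "k \<noteq> 3" "k \<noteq> 5" "k \<noteq> 6" by auto
        then show ?thesis using 7 xZ uZ unfolding Z6_def wE6_explicit by simp
      qed
    qed
    then show "x \<in> Tsub q" using uZ by (auto simp: Tsub_def)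
  qed
qed

lemma crt_iso:
  fixes m n :: nat
  assumes cop: "coprime m n" and m0: "m > 0" and n0: "n > 0"
  shows "integer_mod_group (m*n) \<cong> integer_mod_group m \<times>\<times> integer_mod_group n"
proof -
  define h where "h = (\<lambda>x::int. (x mod int m, x mod int n))"
  have mn0: "m * n > 0" using m0 n0 by simp
  have C1: "carrier (integer_mod_group (m*n)) = {0..<int (m*n)}" using mn0 by (simp add: carrier_integer_mod_group)
  have C2: "carrier (integer_mod_group m \<times>\<times> integer_mod_group n) = {0..<int m} \<times> {0..<int n}"
    using m0 n0 by (simp add: carrier_integer_mod_group)
  have dm: "int m dvd int (m*n)" "int n dvd int (m*n)" by simp_all
  have hom: "h \<in> hom (integer_mod_group (m*n)) (integer_mod_group m \<times>\<times> integer_mod_group n)"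
    unfolding hom_def
  proof (intro CollectI conjI ballI)
    show "h \<in> carrier (integer_mod_group (m * n)) \<rightarrow> carrier (integer_mod_group m \<times>\<times> integer_mod_group n)"
      unfolding C1 C2 h_def using m0 n0 by auto
    fix x y assume "x \<in> carrier (integer_mod_group (m * n))" "y \<in> carrier (integer_mod_group (m * n))"
    show "h (x \<otimes>\<^bsub>integer_mod_group (m * n)\<^esub> y) =
          h x \<otimes>\<^bsub>integer_mod_group m \<times>\<times> integer_mod_group n\<^esub> h y"
      unfolding h_def using dm by (simp add: mod_mod_cancel mod_add_eq del: of_nat_mult)
  qed
  have inj: "inj_on h {0..<int (m*n)}"
  proof (rule inj_onI)
    fix x y assume x: "x \<in> {0..<int (m*n)}" and y: "y \<in> {0..<int (m*n)}" and e: "h x = h y"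
    have "int m dvd x - y" "int n dvd x - y" using e by (auto simp: h_def mod_eq_dvd_iff)
    moreover have "coprime (int m) (int n)" using cop by simp
    ultimately have "int m * int n dvd x - y" by (simp add: divides_mult)
    then have "x mod int (m*n) = y mod int (m*n)" by (simp add: mod_eq_dvd_iff)
    then show "x = y" using x y by simp
  qed
  have img: "h ` {0..<int (m*n)} = {0..<int m} \<times> {0..<int n}"
  proof (rule card_subset_eq)
    show "finite ({0..<int m} \<times> {0..<int n})" by simp
    show "h ` {0..<int (m * n)} \<subseteq> {0..<int m} \<times> {0..<int n}" unfolding h_def using m0 n0 by auto
    show "card (h ` {0..<int (m * n)}) = card ({0..<int m} \<times> {0..<int n})"
      using inj by (simp add: card_image card_cartesian_product nat_mult_distrib)
  qed
  have "h \<in> iso (integer_mod_group (m*n)) (integer_mod_group m \<times>\<times> integer_mod_group n)"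
    unfolding iso_def bij_betw_def using hom inj img C1 C2 by simp
  then show ?thesis by (rule is_isoI)
qed

lemma nt1: fixes r :: nat assumes "r mod 3 \<noteq> 0" shows "coprime r (r*(r+3)+3)"
proof -
  have g: "gcd r ((r+3)*r+3) = gcd r 3" by (rule gcd_add_mult)
  have "\<not> 3 dvd r" using assms by presburger
  then have "coprime 3 r" by (intro prime_imp_coprime) simp_all
  then have "gcd r 3 = 1" by (simp add: coprime_iff_gcd_eq_1 gcd.commute)
  then show ?thesis using g by (simp add: coprime_iff_gcd_eq_1 mult.commute)
qed

lemma nt2: fixes j :: nat shows "coprime 3 (3*j^2+3*j+1::nat)" "coprime (3*j) (3*j^2+3*j+1::nat)"
proof -
  have e1: "3*j^2+3*j+1 = (j^2+j)*3 + (1::nat)" by (simp add: algebra_simps)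
  have e2: "3*j^2+3*j+1 = (j+1)*(3*j) + (1::nat)" by (simp add: algebra_simps power2_eq_square)
  have "gcd 3 ((j^2+j)*3 + (1::nat)) = gcd 3 1" by (rule gcd_add_mult)
  then show "coprime 3 (3*j^2+3*j+1::nat)" unfolding e1 by (simp add: coprime_iff_gcd_eq_1)
  have "gcd (3*j) ((j+1)*(3*j) + (1::nat)) = gcd (3*j) 1" by (rule gcd_add_mult)
  then show "coprime (3*j) (3*j^2+3*j+1::nat)" unfolding e2 by (simp add: coprime_iff_gcd_eq_1)
qed

lemma qge: fixes p k :: nat assumes "Factorial_Ring.prime p" "k \<ge> 1" shows "p^k \<ge> 2"
proof -
  have p2: "p \<ge> 2" using assms(1) by (rule prime_ge_2_nat)
  have "p^1 \<le> p^k" using p2 assms(2) by (intro power_increasing) simp_all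
  then show ?thesis using p2 by simp
qed

lemma NAS: fixes q :: nat assumes "q \<ge> 1" shows "q^3 - 1 = (q-1)*(q^2+q+1)"
proof -
  obtain r where r: "q = Suc r" using assms by (cases q) auto
  have "(Suc r)^3 = r*((Suc r)^2 + Suc r + 1) + 1" by (simp add: power3_eq_cube power2_eq_square algebra_simps)
  then show ?thesis using r by simp
qed

lemma assoc_iso1: "G \<times>\<times> (H \<times>\<times> I) \<cong> (G \<times>\<times> H) \<times>\<times> I"
proof -
  have "(\<lambda>(x,y,z). ((x,y),z)) \<in> iso (G \<times>\<times> (H \<times>\<times> I)) ((G \<times>\<times> H) \<times>\<times> I)"
    by (auto simp add: iso_def hom_def inj_on_def bij_betw_def image_def)
  then show ?thesis by (rule is_isoI)
qed

lemma assoc_iso2: "(G \<times>\<times> H) \<times>\<times> I \<cong> G \<times>\<times> (H \<times>\<times> I)"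
proof -
  have "(\<lambda>((x,y),z). (x,y,z)) \<in> iso ((G \<times>\<times> H) \<times>\<times> I) (G \<times>\<times> (H \<times>\<times> I))"
    by (auto simp add: iso_def hom_def inj_on_def bij_betw_def image_def)
  then show ?thesis by (rule is_isoI)
qed

lemma T_iso_HH: assumes q2: "q \<ge> 2" shows "Tgroup q \<cong> HH q"
proof -
  have gh: "group_hom Z6_group (HH q) (phi q)"
    by (simp add: group_hom_def group_hom_axioms_def group_Z6 group_HH phi_hom q2)
  have "Z6_group Mod kernel Z6_group (HH q) (phi q) \<cong> HH q"
    by (rule group_hom.FactGroup_iso[OF gh phi_surj[OF q2]])
  then show ?thesis by (simp add: Tgroup_def phi_kernel[OF q2])
qed

abbreviation Zm where "Zm n \<equiv> integer_mod_group n"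

lemma gZ: "group (Zm a)" "group (Zm a \<times>\<times> Zm b)" "group ((Zm a \<times>\<times> Zm b) \<times>\<times> Zm c)" "group (Zm a \<times>\<times> (Zm b \<times>\<times> Zm c))"
  by (intro DirProd_group group_integer_mod_group)+

lemma crt_iso': "coprime m n \<Longrightarrow> m > 0 \<Longrightarrow> n > 0 \<Longrightarrow> Zm m \<times>\<times> Zm n \<cong> Zm (m*n)"
  by (rule group.iso_sym[OF gZ(1) crt_iso])

theorem mainTheorem5:
  fixes q p k :: nat
  assumes "Factorial_Ring.prime p" and "k \<ge> 1" and "q = p ^ k"
  defines "N \<equiv> q ^ 3 - 1"
  shows "(q mod 3 = 0 \<or> q mod 3 = 2 \<longrightarrow>
           Tgroup q \<cong> integer_mod_group N \<times>\<times> integer_mod_group N)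
       \<and> (q mod 3 = 1 \<longrightarrow>
           Tgroup q \<cong> integer_mod_group 3 \<times>\<times> integer_mod_group (N div 3) \<times>\<times> integer_mod_group N)
       \<and> Tgroup q \<cong> integer_mod_group (q - 1) \<times>\<times> integer_mod_group (q\<^sup>2 + q + 1) \<times>\<times> integer_mod_group N"
proof -
  have q2: "q \<ge> 2" using qge[OF assms(1,2)] assms(3) by simp
  have T3: "Tgroup q \<cong> Zm (q - 1) \<times>\<times> Zm (q\<^sup>2 + q + 1) \<times>\<times> Zm N"
    using T_iso_HH[OF q2] by (simp add: HH_def N_def)
  have NAS': "N = (q-1)*(q^2+q+1)" using NAS[of q] q2 by (simp add: N_def)
  have A0: "q - 1 > 0" using q2 by simp
  have S0: "q^2+q+1 > 0" by simp
  have T3': "Tgroup q \<cong> (Zm (q - 1) \<times>\<times> Zm (q\<^sup>2 + q + 1)) \<times>\<times> Zm N"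
    using T3 assoc_iso1 by (rule iso_trans)
  have P1: "q mod 3 = 0 \<or> q mod 3 = 2 \<longrightarrow> Tgroup q \<cong> Zm N \<times>\<times> Zm N"
  proof
    assume h: "q mod 3 = 0 \<or> q mod 3 = 2"
    obtain r where r: "q = r + 1" using q2 by (metis add.commute le_Suc_ex le_trans one_le_numeral)
    have "r mod 3 \<noteq> 0" using h unfolding r by presburger
    then have c0: "coprime r (r*(r+3)+3)" by (rule nt1)
    have e: "q - 1 = r" "q^2+q+1 = r*(r+3)+3" using r by (simp_all add: power2_eq_square algebra_simps)
    have cop: "coprime (q-1) (q^2+q+1)" unfolding e by (rule c0)
    have "Zm (q - 1) \<times>\<times> Zm (q\<^sup>2 + q + 1) \<cong> Zm N"
      using crt_iso'[OF cop A0 S0] by (simp add: NAS')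
    then have "(Zm (q - 1) \<times>\<times> Zm (q\<^sup>2 + q + 1)) \<times>\<times> Zm N \<cong> Zm N \<times>\<times> Zm N"
      by (rule group.DirProd_iso_trans[OF gZ(2) _ iso_refl])
    then show "Tgroup q \<cong> Zm N \<times>\<times> Zm N" by (rule iso_trans[OF T3'])
  qed
  have P2: "q mod 3 = 1 \<longrightarrow> Tgroup q \<cong> Zm 3 \<times>\<times> Zm (N div 3) \<times>\<times> Zm N"
  proof
    assume h: "q mod 3 = 1"
    define j where "j = q div 3"
    have j: "q = 3*j + 1" using div_mult_mod_eq[of q 3] h unfolding j_def by simp
    define s where "s = 3*j^2+3*j+1"
    have c1: "coprime 3 s" "coprime (3*j) s" unfolding s_def by (rule nt2)+
    have A: "q - 1 = 3*j" using j by simp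
    have S: "q^2+q+1 = 3*s" using j by (simp add: s_def power2_eq_square algebra_simps)
    have j0: "j > 0" using A A0 by simp
    have s0: "s > 0" by (simp add: s_def)
    have N3: "N = 3*(3*j*s)" unfolding NAS' A S by simp
    have Nd: "N div 3 = 3*j*s" unfolding N3 by simp
    have i1: "Zm (3*j) \<times>\<times> Zm (3*s) \<cong> Zm (3*j) \<times>\<times> (Zm 3 \<times>\<times> Zm s)"
      by (rule group.DirProd_iso_trans[OF gZ(1) iso_refl crt_iso[OF c1(1)]]) (simp_all add: s0)
    have i2: "Zm (3*j) \<times>\<times> (Zm 3 \<times>\<times> Zm s) \<cong> (Zm (3*j) \<times>\<times> Zm 3) \<times>\<times> Zm s" by (rule assoc_iso1)
    have i3: "(Zm (3*j) \<times>\<times> Zm 3) \<times>\<times> Zm s \<cong> (Zm 3 \<times>\<times> Zm (3*j)) \<times>\<times> Zm s"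
      by (rule group.DirProd_iso_trans[OF gZ(2) DirProd_commute_iso iso_refl])
    have i4: "(Zm 3 \<times>\<times> Zm (3*j)) \<times>\<times> Zm s \<cong> Zm 3 \<times>\<times> (Zm (3*j) \<times>\<times> Zm s)" by (rule assoc_iso2)
    have i5: "Zm 3 \<times>\<times> (Zm (3*j) \<times>\<times> Zm s) \<cong> Zm 3 \<times>\<times> Zm (3*j*s)"
      by (rule group.DirProd_iso_trans[OF gZ(1) iso_refl crt_iso'[OF c1(2)]]) (simp_all add: s0 j0)
    have "Zm (q - 1) \<times>\<times> Zm (q\<^sup>2 + q + 1) \<cong> Zm 3 \<times>\<times> Zm (N div 3)"
      unfolding A S Nd by (rule iso_trans[OF i1 iso_trans[OF i2 iso_trans[OF i3 iso_trans[OF i4 i5]]]])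
    then have "(Zm (q - 1) \<times>\<times> Zm (q\<^sup>2 + q + 1)) \<times>\<times> Zm N \<cong> (Zm 3 \<times>\<times> Zm (N div 3)) \<times>\<times> Zm N"
      by (rule group.DirProd_iso_trans[OF gZ(2) _ iso_refl])
    then show "Tgroup q \<cong> Zm 3 \<times>\<times> Zm (N div 3) \<times>\<times> Zm N" by (rule iso_trans[OF T3' iso_trans[OF _ assoc_iso2]])
  qed
  show ?thesis using P1 P2 T3 by blast
qed

end
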